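(* In the general setting of the context, for every $h\in\{0,1,\dots,L-1\}$, $$\mathbb{P}(P_h<P^* )\le\exp\Big(-\frac{\epsilon^2}{4\gamma}\Big)+m\exp\Big(-\frac{\epsilon^2}{6\gamma}\Big).$$
   Context: General setting. Let $m,k,n$ be positive integers and $b\in\mathbb{R}^m_{++}$. Let $\mathcal G$ be the set of proper, concave, upper semicontinuous functions $f:\mathbb{R}^k\to[-\infty,\infty)$ with bounded superlevel sets such that $\mathrm{dom} f\subset\mathbb{R}^k_+$ and $f(0)=0$. Let $f_1,\dots,f_n\in\mathcal G$ and $A_1,\dots,A_n\in\mathbb{R}_+^{m\times k}$. Let $P^*=\sup\{\sum_{t=1}^n f_t(x_t): x_t\in\mathbb{R}^k,\ \sum_{t=1}^n A_tx_t\le b\}$ and assume $P^*>0$. Let $\gamma>0$ satisfy, for every $t\in[n]$: $(A_tx)_i/b_i\le\gamma$ for all $i\in[m]$ and all $x$ with $f_t(x)\ge0$, and $f_t(x)\le\gamma P^*$ for all $x\in\mathrm{dom} f_t$. Let $\epsilon\in(0,1)$ be such that $L=\log_2(1/\epsilon)$ and $n\epsilon$ are integers. Let $\sigma$ be a uniformly random permutation of $[n]$; probabilities are over $\sigma$. For $h\in\{0,\dots,L-1\}$ let $\theta_h=2^{-(h+1)/2}\epsilon^{1/2}$ and $$P_h=\sup\Big\{\tfrac{1}{2^h\epsilon(1-\theta_h)}\sum_{t=1}^{2^hn\epsilon}f_{\sigma(t)}(x_t)\ :\ x_t\in\mathbb{R}^k,\ \tfrac{1}{2^h\epsilon(1+\theta_h)}\sum_{t=1}^{2^hn\epsilon}A_{\sigma(t)}x_t\le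 b\Big\}.$$ *)

theory Defs
  imports "HOL-Analysis.Analysis" "HOL-Probability.Probability"
begin

(* extended-valued functions R^k -> [-inf, inf) are modelled as ereal-valued functions
   that never take the value +inf *)

definition ext_dom :: "('a \<Rightarrow> ereal) \<Rightarrow> 'a set" where
  "ext_dom f = {x. f x \<noteq> -\<infinity>}"

definition concave_ext :: "('a::real_vector \<Rightarrow> ereal) \<Rightarrow> bool" where
  "concave_ext f \<longleftrightarrow> convex {(x, r::real). ereal r \<le> f x}"

definition usc_ext :: "('a::topological_space \<Rightarrow> ereal) \<Rightarrow> bool" where
  "usc_ext f \<longleftrightarrow> (\<forall>x. Limsup (at x) f \<le> f x)"

definition proper_ext :: "('a \<Rightarrow> ereal) \<Rightarrow> bool" where
  "proper_ext f \<longleftrightarrow> (\<forall>x. f x \<noteq> \<infinity>) \<and> ext_dom f \<noteq> {}"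

definition classG :: "(real^'k \<Rightarrow> ereal) set" where
  "classG = {f. proper_ext f \<and> concave_ext f \<and> usc_ext f
              \<and> (\<forall>\<alpha>::real. bounded {x. ereal \<alpha> \<le> f x})
              \<and> (\<forall>x\<in>ext_dom f. \<forall>j. 0 \<le> x $ j)
              \<and> f 0 = 0}"

definition Pstar :: "nat \<Rightarrow> (nat \<Rightarrow> real^'k \<Rightarrow> ereal) \<Rightarrow> (nat \<Rightarrow> real^'k^'m) \<Rightarrow> real^'m \<Rightarrow> ereal" where
  "Pstar n f A b = (SUP x \<in> {x :: nat \<Rightarrow> real^'k. \<forall>i. (\<Sum>t=1..n. A t *v x t) $ i \<le> b $ i}.
                      \<Sum>t=1..n. f t (x t))"

(* P_h for permutation \<sigma>, with l = n*eps *)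
definition theta :: "real \<Rightarrow> nat \<Rightarrow> real" where
  "theta \<epsilon> h = 2 powr (- (real h + 1) / 2) * sqrt \<epsilon>"

definition Ph :: "real \<Rightarrow> nat \<Rightarrow> nat \<Rightarrow> (nat \<Rightarrow> nat) \<Rightarrow> (nat \<Rightarrow> real^'k \<Rightarrow> ereal) \<Rightarrow> (nat \<Rightarrow> real^'k^'m) \<Rightarrow> real^'m \<Rightarrow> ereal" where
  "Ph \<epsilon> l h \<sigma> f A b =
     (SUP x \<in> {x :: nat \<Rightarrow> real^'k. \<forall>i.
          (1 / (2 ^ h * \<epsilon> * (1 + theta \<epsilon> h))) * (\<Sum>t=1..2^h * l. A (\<sigma> t) *v x t) $ i \<le> b $ i}.
        ereal (1 / (2 ^ h * \<epsilon> * (1 - theta \<epsilon> h))) * (\<Sum>t=1..2^h * l. f (\<sigma> t) (x t)))"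

end

theory Submission imports Defs begin

lemma perm_in: "\<sigma> permutes S \<Longrightarrow> t \<in> S \<Longrightarrow> \<sigma> t \<in> S"
  by (simp add: permutes_in_image)

lemma perm_step:
  fixes z :: "nat \<Rightarrow> real"
  assumes z0: "\<forall>t\<in>{1..n}. 0 \<le> z t" and r: "r < n"
  shows "(\<Sum>\<sigma>\<in>{\<sigma>::nat\<Rightarrow>nat. \<sigma> permutes {1..n}}. (\<Prod>t=1..r. z (\<sigma> t)) * z (\<sigma> (Suc r)))
     \<le> (\<Sum>t=1..n. z t) / n * (\<Sum>\<sigma>\<in>{\<sigma>::nat\<Rightarrow>nat. \<sigma> permutes {1..n}}. \<Prod>t=1..r. z (\<sigma> t))"
proof -
  define P where "P = {\<sigma>::nat\<Rightarrow>nat. \<sigma> permutes {1..n::nat}}"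
  define F where "F \<sigma> = (\<Prod>t=1..r. z (\<sigma> t))" for \<sigma> :: "nat \<Rightarrow> nat"
  define c where "c u = (\<Sum>\<sigma>\<in>P. F \<sigma> * z (\<sigma> u))" for u
  define T where "T = (\<Sum>t=1..n. z t)"
  have Fnn: "0 \<le> F \<sigma>" if "\<sigma> \<in> P" for \<sigma>
  proof -
    have "\<forall>t\<in>{1..r}. 0 \<le> z (\<sigma> t)" using that z0 r unfolding P_def
      by (auto intro!: z0[rule_format] perm_in[of \<sigma> "{1..n}"])
    then show ?thesis unfolding F_def by (intro prod_nonneg) auto
  qed
  have sumc: "(\<Sum>u=1..n. c u) = T * (\<Sum>\<sigma>\<in>P. F \<sigma>)"
  proof -
    have "(\<Sum>u=1..n. c u) = (\<Sum>\<sigma>\<in>P. F \<sigma> * (\<Sum>u=1..n. z (\<sigma> u)))"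
      unfolding c_def by (simp add: sum_distrib_left sum.swap[of _ P])
    also have "\<dots> = (\<Sum>\<sigma>\<in>P. F \<sigma> * T)"
    proof (rule sum.cong[OF refl])
      fix \<sigma> assume "\<sigma> \<in> P"
      then have "bij_betw \<sigma> {1..n} {1..n}" unfolding P_def by (simp add: permutes_imp_bij)
      then have "(\<Sum>u=1..n. z (\<sigma> u)) = T" unfolding T_def
        using sum.reindex_bij_betw by blast
      then show "F \<sigma> * (\<Sum>u=1..n. z (\<sigma> u)) = F \<sigma> * T" by simp
    qed
    finally show ?thesis by (simp add: sum_distrib_left mult.commute)
  qed
  have rperm: "c u = (\<Sum>\<sigma>\<in>P. F (\<sigma> \<circ> Transposition.transpose u (Suc r)) * z ((\<sigma> \<circ> Transposition.transpose u (Suc r)) u))"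
    if "u \<in> {1..n}" for u
    unfolding c_def P_def
    by (rule sum_permutations_compose_right[where f="\<lambda>\<sigma>. F \<sigma> * z (\<sigma> u)" and S="{1..n}"], rule permutes_swap_id, use that r in auto)
  have ge: "c (Suc r) \<le> c u" if u: "u \<in> {1..n}" for u
  proof (cases "r < u")
    case True
    have "c u = (\<Sum>\<sigma>\<in>P. F \<sigma> * z (\<sigma> (Suc r)))"
    proof -
      have "c u = (\<Sum>\<sigma>\<in>P. F (\<sigma> \<circ> Transposition.transpose u (Suc r)) * z ((\<sigma> \<circ> Transposition.transpose u (Suc r)) u))"
        using rperm u by blast
      also have "\<dots> = (\<Sum>\<sigma>\<in>P. F \<sigma> * z (\<sigma> (Suc r)))"
      proof (rule sum.cong[OF refl])
        fix \<sigma>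
        have "F (\<sigma> \<circ> Transposition.transpose u (Suc r)) = F \<sigma>"
          unfolding F_def using True by (intro prod.cong) (auto simp: transpose_apply_other)
        then show "F (\<sigma> \<circ> Transposition.transpose u (Suc r)) * z ((\<sigma> \<circ> Transposition.transpose u (Suc r)) u) = F \<sigma> * z (\<sigma> (Suc r))"
          by simp
      qed
      finally show ?thesis .
    qed
    then show ?thesis unfolding c_def by simp
  next
    case False
    then have ur: "u \<in> {1..r}" using u by auto
    define G where "G \<sigma> = (\<Prod>t\<in>{1..r}-{u}. z (\<sigma> t))" for \<sigma> :: "nat \<Rightarrow> nat"
    have FG: "F \<sigma> = z (\<sigma> u) * G \<sigma>" for \<sigma>
      unfolding F_def G_def using ur by (simp add: prod.remove)
    have Gnn: "0 \<le> G \<sigma>" if "\<sigma> \<in> P" for \<sigma>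
    proof -
      have "\<forall>t\<in>{1..r}. 0 \<le> z (\<sigma> t)" using that z0 r unfolding P_def
        by (auto intro!: z0[rule_format] perm_in[of \<sigma> "{1..n}"])
      then show ?thesis unfolding G_def by (intro prod_nonneg) auto
    qed
    define D where "D = (\<Sum>\<sigma>\<in>P. G \<sigma> * z (\<sigma> u) * (z (\<sigma> u) - z (\<sigma> (Suc r))))"
    have D1: "c u - c (Suc r) = D"
      unfolding c_def D_def FG by (simp add: sum_subtractf[symmetric] algebra_simps)
    have D2: "D = (\<Sum>\<sigma>\<in>P. G \<sigma> * z (\<sigma> (Suc r)) * (z (\<sigma> (Suc r)) - z (\<sigma> u)))"
    proof -
      let ?q = "Transposition.transpose u (Suc r)"
      have "D = (\<Sum>\<sigma>\<in>P. G (\<sigma> \<circ> ?q) * z ((\<sigma> \<circ> ?q) u) * (z ((\<sigma> \<circ> ?q) u) - z ((\<sigma> \<circ> ?q) (Suc r))))"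
        unfolding D_def P_def
        by (rule sum_permutations_compose_right[where f="\<lambda>\<sigma>. G \<sigma> * z (\<sigma> u) * (z (\<sigma> u) - z (\<sigma> (Suc r)))" and S="{1..n}"], rule permutes_swap_id, use u r in auto)
      also have "\<dots> = (\<Sum>\<sigma>\<in>P. G \<sigma> * z (\<sigma> (Suc r)) * (z (\<sigma> (Suc r)) - z (\<sigma> u)))"
      proof (rule sum.cong[OF refl])
        fix \<sigma>
        have "G (\<sigma> \<circ> ?q) = G \<sigma>"
          unfolding G_def using ur by (intro prod.cong) (auto simp: transpose_apply_other)
        then show "G (\<sigma> \<circ> ?q) * z ((\<sigma> \<circ> ?q) u) * (z ((\<sigma> \<circ> ?q) u) - z ((\<sigma> \<circ> ?q) (Suc r))) =
              G \<sigma> * z (\<sigma> (Suc r)) * (z (\<sigma> (Suc r)) - z (\<sigma> u))" by simp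
      qed
      finally show ?thesis .
    qed
    have "2 * D = (\<Sum>\<sigma>\<in>P. G \<sigma> * (z (\<sigma> u) - z (\<sigma> (Suc r)))^2)"
      by (subst mult_2, subst (1) D_def, subst D2) (simp add: sum.distrib[symmetric] power2_eq_square algebra_simps)
    also have "\<dots> \<ge> 0" by (intro sum_nonneg mult_nonneg_nonneg Gnn) auto
    finally show ?thesis using D1 by simp
  qed
  have "real n * c (Suc r) = (\<Sum>u=1..n. c (Suc r))" by simp
  also have "\<dots> \<le> (\<Sum>u=1..n. c u)" by (intro sum_mono ge) auto
  finally have "real n * c (Suc r) \<le> T * (\<Sum>\<sigma>\<in>P. F \<sigma>)" using sumc by simp
  then have "c (Suc r) \<le> T / n * (\<Sum>\<sigma>\<in>P. F \<sigma>)" using r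
    by (simp add: field_simps)
  then show ?thesis unfolding c_def F_def T_def P_def by simp
qed

lemma perm_prod_bound:
  fixes z :: "nat \<Rightarrow> real"
  assumes z0: "\<forall>t\<in>{1..n}. 0 \<le> z t" and s: "s \<le> n"
  shows "(\<Sum>\<sigma>\<in>{\<sigma>::nat\<Rightarrow>nat. \<sigma> permutes {1..n}}. \<Prod>t=1..s. z (\<sigma> t))
     \<le> card {\<sigma>::nat\<Rightarrow>nat. \<sigma> permutes {1..n}} * ((\<Sum>t=1..n. z t) / n) ^ s"
  using s
proof (induction s)
  case 0
  then show ?case by simp
next
  case (Suc s)
  have T0: "0 \<le> (\<Sum>t=1..n. z t) / n" using z0 by (intro divide_nonneg_nonneg sum_nonneg) auto
  have "(\<Sum>\<sigma>\<in>{\<sigma>::nat\<Rightarrow>nat. \<sigma> permutes {1..n}}. \<Prod>t=1..Suc s. z (\<sigma> t))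
      = (\<Sum>\<sigma>\<in>{\<sigma>::nat\<Rightarrow>nat. \<sigma> permutes {1..n}}. (\<Prod>t=1..s. z (\<sigma> t)) * z (\<sigma> (Suc s)))"
    by (simp add: prod.nat_ivl_Suc')
  also have "\<dots> \<le> (\<Sum>t=1..n. z t) / n * (\<Sum>\<sigma>\<in>{\<sigma>::nat\<Rightarrow>nat. \<sigma> permutes {1..n}}. \<Prod>t=1..s. z (\<sigma> t))"
    using perm_step[OF z0, of s] Suc.prems by simp
  also have "\<dots> \<le> (\<Sum>t=1..n. z t) / n * (card {\<sigma>::nat\<Rightarrow>nat. \<sigma> permutes {1..n}} * ((\<Sum>t=1..n. z t) / n) ^ s)"
    using Suc by (intro mult_left_mono T0) auto
  finally show ?case by (simp add: algebra_simps)
qed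

lemma exp_convex_bound:
  fixes y lam :: real
  assumes "0 \<le> y" "y \<le> 1"
  shows "exp (lam * y) \<le> 1 + (exp lam - 1) * y"
proof -
  have "exp ((1 - y) *\<^sub>R 0 + y *\<^sub>R lam) \<le> (1 - y) * exp 0 + y * exp lam"
    using convex_onD[OF exp_convex, of y 0 lam] assms by simp
  then show ?thesis by (simp add: algebra_simps)
qed

lemma perm_mgf:
  fixes y :: "nat \<Rightarrow> real"
  assumes y: "\<forall>t\<in>{1..n}. 0 \<le> y t \<and> y t \<le> 1" and s: "s \<le> n" and n: "0 < n"
  shows "(\<Sum>\<sigma>\<in>{\<sigma>::nat\<Rightarrow>nat. \<sigma> permutes {1..n}}. exp (lam * (\<Sum>t=1..s. y (\<sigma> t))))
     \<le> card {\<sigma>::nat\<Rightarrow>nat. \<sigma> permutes {1..n}} * exp ((exp lam - 1) * (s * (\<Sum>t=1..n. y t) / n))"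
proof -
  define z where "z t = exp (lam * y t)" for t
  have "(\<Sum>\<sigma>\<in>{\<sigma>::nat\<Rightarrow>nat. \<sigma> permutes {1..n}}. exp (lam * (\<Sum>t=1..s. y (\<sigma> t))))
      = (\<Sum>\<sigma>\<in>{\<sigma>::nat\<Rightarrow>nat. \<sigma> permutes {1..n}}. \<Prod>t=1..s. z (\<sigma> t))"
    unfolding z_def by (simp add: sum_distrib_left exp_sum)
  also have "\<dots> \<le> card {\<sigma>::nat\<Rightarrow>nat. \<sigma> permutes {1..n}} * ((\<Sum>t=1..n. z t) / n) ^ s"
    by (rule perm_prod_bound) (use s in \<open>auto simp: z_def\<close>)
  also have "\<dots> \<le> card {\<sigma>::nat\<Rightarrow>nat. \<sigma> permutes {1..n}} * exp ((exp lam - 1) * ((\<Sum>t=1..n. y t) / n)) ^ s"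
  proof (intro mult_left_mono power_mono)
    have "(\<Sum>t=1..n. z t) \<le> (\<Sum>t=1..n. 1 + (exp lam - 1) * y t)"
      unfolding z_def using y by (intro sum_mono exp_convex_bound) auto
    also have "\<dots> = n + (exp lam - 1) * (\<Sum>t=1..n. y t)"
      by (simp add: sum.distrib sum_distrib_left)
    finally have "(\<Sum>t=1..n. z t) / n \<le> 1 + (exp lam - 1) * ((\<Sum>t=1..n. y t) / n)"
      using n by (simp add: field_simps)
    also have "\<dots> \<le> exp ((exp lam - 1) * ((\<Sum>t=1..n. y t) / n))"
      by (rule exp_ge_add_one_self)
    finally show "(\<Sum>t=1..n. z t) / n \<le> exp ((exp lam - 1) * ((\<Sum>t=1..n. y t) / n))" .
    show "0 \<le> (\<Sum>t=1..n. z t) / n" unfolding z_def by (intro divide_nonneg_nonneg sum_nonneg) auto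
  qed auto
  also have "\<dots> = card {\<sigma>::nat\<Rightarrow>nat. \<sigma> permutes {1..n}} * exp ((exp lam - 1) * (s * (\<Sum>t=1..n. y t) / n))"
    by (simp add: exp_of_nat_mult[symmetric] algebra_simps)
  finally show ?thesis .
qed

lemma ln_lower1:
  fixes y :: real assumes "0 < y" "y \<le> 1"
  shows "(y - 1/y)/2 \<le> ln y"
proof -
  define f where "f x = ln x - (x - 1/x)/2" for x :: real
  have "f 1 \<le> f y"
  proof (rule DERIV_nonpos_imp_nonincreasing[OF assms(2)])
    fix x assume x: "y \<le> x" "x \<le> 1"
    then have xp: "0 < x" using assms by simp
    have "(f has_real_derivative (1/x - (1 + 1/x^2)/2)) (at x)"
      unfolding f_def using xp
      by (auto intro!: derivative_eq_intros simp: field_simps power2_eq_square)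
    moreover have "1/x - (1 + 1/x^2)/2 = - ((x-1)^2 / (2*x^2))"
      using xp by (simp add: field_simps power2_eq_square)
    moreover have "(x-1)^2 / (2*x^2) \<ge> 0" by simp
    ultimately show "\<exists>d. (f has_real_derivative d) (at x) \<and> d \<le> 0" by force
  qed
  then show ?thesis unfolding f_def by simp
qed

lemma deriv_aux2: "0 \<le> (u::real) \<Longrightarrow> ((\<lambda>u. ln (1+u) - 2*u/(2+u)) has_real_derivative (1/(1+u) - 4/(2+u)^2)) (at u)"
  apply (rule derivative_eq_intros refl | simp)+
  apply (simp add: field_simps power2_eq_square)
  done

lemma ln_lower2:
  fixes x :: real assumes "0 \<le> x"
  shows "2*x/(2+x) \<le> ln (1+x)"
proof -
  define f where "f u = ln (1+u) - 2*u/(2+u)" for u :: real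
  have "f 0 \<le> f x"
  proof (rule DERIV_nonneg_imp_nondecreasing[OF assms])
    fix u :: real assume u: "0 \<le> u" "u \<le> x"
    have "(f has_real_derivative (1/(1+u) - 4/(2+u)^2)) (at u)"
      unfolding f_def using deriv_aux2[OF u(1)] by simp
    moreover have "4/(2+u)^2 \<le> 1/(1+u)" using u by (simp add: divide_simps power2_eq_square algebra_simps)
    ultimately show "\<exists>d. (f has_real_derivative d) (at u) \<and> 0 \<le> d"
      by (intro exI[of _ "1/(1+u) - 4/(2+u)^2"]) simp
  qed
  then show ?thesis unfolding f_def by simp
qed

lemma chern_lower_ineq:
  fixes th :: real assumes "0 < th" "th < 1"
  shows "- th - (1 - th) * ln (1 - th) \<le> - (th^2/2)"
proof -
  have "((1-th) - 1/(1-th))/2 \<le> ln (1-th)" using assms by (intro ln_lower1) auto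
  then have "(1-th) * (((1-th) - 1/(1-th))/2) \<le> (1-th) * ln (1-th)"
    using assms by (intro mult_left_mono) auto
  moreover have "(1-th) * (((1-th) - 1/(1-th))/2) = ((1-th)^2 - 1)/2"
    using assms by (simp add: field_simps power2_eq_square)
  moreover have "((1-th)^2 - 1)/2 = th^2/2 - th" by (simp add: power2_eq_square field_simps)
  ultimately show ?thesis by linarith
qed

lemma chern_upper_ineq:
  fixes th :: real assumes "0 < th" "th \<le> 1"
  shows "th - (1 + th) * ln (1 + th) \<le> - (th^2/3)"
proof -
  have "2*th/(2+th) \<le> ln (1+th)" using assms by (intro ln_lower2) auto
  then have "(1+th) * (2*th/(2+th)) \<le> (1+th) * ln (1+th)"
    using assms by (intro mult_left_mono) auto
  moreover have "th + th^2/3 \<le> (1+th) * (2*th/(2+th))"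
  proof -
    have "(th + th^2/3) * (2+th) \<le> (1+th) * (2*th)"
      using assms by (simp add: algebra_simps power2_eq_square)
    then show ?thesis using assms by (simp add: field_simps)
  qed
  ultimately show ?thesis by simp
qed


lemma chernoff_lower:
  fixes y :: "nat \<Rightarrow> real"
  assumes y: "\<forall>t\<in>{1..n}. 0 \<le> y t \<and> y t \<le> 1" and s: "s \<le> n" and n: "0 < n"
    and th: "0 < th" "th < 1"
    and mu: "mu = s * (\<Sum>t=1..n. y t) / n"
  shows "real (card {\<sigma>\<in>{\<sigma>::nat\<Rightarrow>nat. \<sigma> permutes {1..n}}. (\<Sum>t=1..s. y (\<sigma> t)) \<le> (1-th)*mu})
    \<le> card {\<sigma>::nat\<Rightarrow>nat. \<sigma> permutes {1..n}} * exp (-(th^2*mu/2))"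
proof -
  define P where "P = {\<sigma>::nat\<Rightarrow>nat. \<sigma> permutes {1..n}}"
  define E where "E = {\<sigma>\<in>P. (\<Sum>t=1..s. y (\<sigma> t)) \<le> (1-th)*mu}"
  define lam where "lam = ln (1 - th)"
  have finP: "finite P" unfolding P_def by (simp add: finite_permutations)
  have elam: "exp lam = 1 - th" unfolding lam_def using th by simp
  have lam0: "lam \<le> 0" unfolding lam_def using th by simp
  have mu0: "0 \<le> mu" unfolding mu using y by (auto intro!: divide_nonneg_nonneg mult_nonneg_nonneg sum_nonneg)
  have "card E * exp (lam * ((1-th)*mu)) = (\<Sum>\<sigma>\<in>E. exp (lam * ((1-th)*mu)))" by simp
  also have "\<dots> \<le> (\<Sum>\<sigma>\<in>E. exp (lam * (\<Sum>t=1..s. y (\<sigma> t))))"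
    by (intro sum_mono) (auto simp: E_def intro!: mult_left_mono_neg lam0)
  also have "\<dots> \<le> (\<Sum>\<sigma>\<in>P. exp (lam * (\<Sum>t=1..s. y (\<sigma> t))))"
    by (intro sum_mono2 finP) (auto simp: E_def)
  also have "\<dots> \<le> card P * exp ((exp lam - 1) * mu)"
    unfolding P_def mu using perm_mgf[OF y s n, of lam] by simp
  also have "\<dots> = card P * exp (- th * mu)" using elam by simp
  finally have "card E * exp (lam * ((1-th)*mu)) \<le> card P * exp (- th * mu)" .
  then have "card E \<le> card P * exp (- th * mu) / exp (lam * ((1-th)*mu))"
    by (simp add: field_simps)
  also have "\<dots> = card P * exp (- th * mu - lam * ((1-th)*mu))" by (simp add: exp_diff)
  also have "\<dots> = card P * exp ((- th - (1-th) * ln (1-th)) * mu)"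
    by (simp add: lam_def algebra_simps)
  also have "\<dots> \<le> card P * exp (- (th^2/2) * mu)"
  proof -
    have "(- th - (1-th) * ln (1-th)) * mu \<le> (- (th^2/2)) * mu"
      using chern_lower_ineq[OF th] mu0 by (rule mult_right_mono)
    then show ?thesis by (intro mult_left_mono) auto
  qed
  finally show ?thesis unfolding E_def P_def by (simp add: algebra_simps)
qed

lemma chernoff_upper:
  fixes y :: "nat \<Rightarrow> real"
  assumes y: "\<forall>t\<in>{1..n}. 0 \<le> y t \<and> y t \<le> 1" and s: "s \<le> n" and n: "0 < n"
    and th: "0 < th" "th \<le> 1"
    and mu: "s * (\<Sum>t=1..n. y t) / n \<le> mu" and mu0: "0 \<le> mu"
  shows "real (card {\<sigma>\<in>{\<sigma>::nat\<Rightarrow>nat. \<sigma> permutes {1..n}}. (1+th)*mu \<le> (\<Sum>t=1..s. y (\<sigma> t))})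
    \<le> card {\<sigma>::nat\<Rightarrow>nat. \<sigma> permutes {1..n}} * exp (-(th^2*mu/3))"
proof -
  define P where "P = {\<sigma>::nat\<Rightarrow>nat. \<sigma> permutes {1..n}}"
  define E where "E = {\<sigma>\<in>P. (1+th)*mu \<le> (\<Sum>t=1..s. y (\<sigma> t))}"
  define lam where "lam = ln (1 + th)"
  have finP: "finite P" unfolding P_def by (simp add: finite_permutations)
  have elam: "exp lam = 1 + th" unfolding lam_def using th by simp
  have lam0: "0 \<le> lam" unfolding lam_def using th by simp
  have "card E * exp (lam * ((1+th)*mu)) = (\<Sum>\<sigma>\<in>E. exp (lam * ((1+th)*mu)))" by simp
  also have "\<dots> \<le> (\<Sum>\<sigma>\<in>E. exp (lam * (\<Sum>t=1..s. y (\<sigma> t))))"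
    by (intro sum_mono) (auto simp: E_def intro!: mult_left_mono lam0)
  also have "\<dots> \<le> (\<Sum>\<sigma>\<in>P. exp (lam * (\<Sum>t=1..s. y (\<sigma> t))))"
    by (intro sum_mono2 finP) (auto simp: E_def)
  also have "\<dots> \<le> card P * exp ((exp lam - 1) * (s * (\<Sum>t=1..n. y t) / n))"
    unfolding P_def using perm_mgf[OF y s n, of lam] by simp
  also have "\<dots> \<le> card P * exp (th * mu)"
  proof -
    have "th * (s * (\<Sum>t=1..n. y t) / n) \<le> th * mu" using th mu by (intro mult_left_mono) auto
    then show ?thesis using elam by (intro mult_left_mono) auto
  qed
  finally have "card E * exp (lam * ((1+th)*mu)) \<le> card P * exp (th * mu)" .
  then have "card E \<le> card P * exp (th * mu) / exp (lam * ((1+th)*mu))"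
    by (simp add: field_simps)
  also have "\<dots> = card P * exp (th * mu - lam * ((1+th)*mu))" by (simp add: exp_diff)
  also have "\<dots> = card P * exp ((th - (1+th) * ln (1+th)) * mu)"
    by (simp add: lam_def algebra_simps)
  also have "\<dots> \<le> card P * exp (- (th^2/3) * mu)"
  proof -
    have "(th - (1+th) * ln (1+th)) * mu \<le> (- (th^2/3)) * mu"
      using chern_upper_ineq[OF th] mu0 by (rule mult_right_mono)
    then show ?thesis by (intro mult_left_mono) auto
  qed
  finally show ?thesis unfolding E_def P_def by (simp add: algebra_simps)
qed

lemma classG_bounded:
  fixes f :: "real^'k \<Rightarrow> ereal"
  assumes "f \<in> classG"
  shows "\<exists>M::real. \<forall>x. f x \<le> ereal M"
proof -
  have fin: "\<forall>x. f x \<noteq> \<infinity>" and usc: "\<forall>x. Limsup (at x) f \<le> f x"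
    and bd: "bounded {x. ereal 0 \<le> f x}"
    using assms unfolding classG_def proper_ext_def usc_ext_def by auto
  define c where "c x = (if f x = -\<infinity> then 0 else real_of_ereal (f x) + 1)" for x
  have fc: "f x < ereal (c x)" for x
    using fin[rule_format, of x] unfolding c_def by (cases "f x") auto
  have "\<exists>U. open U \<and> x \<in> U \<and> (\<forall>y\<in>U. f y < ereal (c x))" for x
  proof -
    have "Limsup (at x) f < ereal (c x)" using usc fc by (meson le_less_trans)
    then have "eventually (\<lambda>y. f y < ereal (c x)) (at x)" by (rule Limsup_lessD)
    then obtain U where "open U" "x \<in> U" "\<forall>y\<in>U. y \<noteq> x \<longrightarrow> f y < ereal (c x)"
      unfolding eventually_at_topological by auto
    then show ?thesis using fc by metis
  qed
  then obtain U where U: "\<And>x. open (U x) \<and> x \<in> U x \<and> (\<forall>y\<in>U x. f y < ereal (c x))"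
    by metis
  define S where "S = closure {x. ereal 0 \<le> f x}"
  have "compact S" unfolding S_def using bd by simp
  moreover have "S \<subseteq> \<Union> (U ` S)" using U by blast
  ultimately obtain C where C: "C \<subseteq> S" "finite C" "S \<subseteq> \<Union> (U ` C)"
    using compactE_image[of S S U] U by metis
  define M where "M = Max (insert 0 (c ` C))"
  have "f x \<le> ereal M" for x
  proof (cases "ereal 0 \<le> f x")
    case True
    then have "x \<in> S" unfolding S_def by (simp add: closure_subset[THEN subsetD])
    then obtain z where z: "z \<in> C" "x \<in> U z" using C by auto
    then have "f x < ereal (c z)" using U by blast
    moreover have "c z \<le> M" unfolding M_def using z C by (intro Max_ge) auto
    ultimately show ?thesis by (meson less_imp_le order_trans ereal_less_eq(3))
  next
    case False
    moreover have "0 \<le> M" unfolding M_def using C by (intro Max_ge) auto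
    ultimately show ?thesis by (meson le_cases order_trans ereal_less_eq(3))
  qed
  then show ?thesis by blast
qed

theorem mainTheorem4:
  fixes n L l h :: nat and \<epsilon> \<gamma> :: real
    and f :: "nat \<Rightarrow> real^'k \<Rightarrow> ereal" and A :: "nat \<Rightarrow> real^'k^'m" and b :: "real^'m"
  assumes n_pos: "0 < n"
    and b_pos: "\<forall>i. 0 < b $ i"
    and fG: "\<forall>t\<in>{1..n}. f t \<in> classG"
    and A_nonneg: "\<forall>t\<in>{1..n}. \<forall>i j. 0 \<le> A t $ i $ j"
    and Pstar_pos: "Pstar n f A b > 0"
    and gamma_pos: "\<gamma> > 0"
    and gamma_A: "\<forall>t\<in>{1..n}. \<forall>x. f t x \<ge> 0 \<longrightarrow> (\<forall>i. (A t *v x) $ i / b $ i \<le> \<gamma>)"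
    and gamma_f: "\<forall>t\<in>{1..n}. \<forall>x\<in>ext_dom (f t). f t x \<le> ereal \<gamma> * Pstar n f A b"
    and eps: "0 < \<epsilon>" "\<epsilon> < 1"
    and L_def: "real L = log 2 (1 / \<epsilon>)"
    and l_def: "real l = real n * \<epsilon>"
    and h: "h < L"
  shows "measure_pmf.prob (pmf_of_set {\<sigma>. \<sigma> permutes {1..n}})
            {\<sigma>. Ph \<epsilon> l h \<sigma> f A b < Pstar n f A b}
         \<le> exp (- ((\<epsilon> ^ 2) / (4 * \<gamma>))) + real CARD('m) * exp (- ((\<epsilon> ^ 2) / (6 * \<gamma>)))"
proof -
  define Perms where "Perms = {\<sigma>::nat\<Rightarrow>nat. \<sigma> permutes {1..n}}"
  have finPerms: "finite Perms" unfolding Perms_def by (simp add: finite_permutations)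
  have PermsNE: "Perms \<noteq> {}" unfolding Perms_def using permutes_id by blast
  have cardP: "0 < card Perms" using finPerms PermsNE by (simp add: card_gt_0_iff)
  have "\<forall>t\<in>{1..n}. \<exists>M::real. \<forall>x. f t x \<le> ereal M" using fG classG_bounded by blast
  then obtain M where M: "\<forall>t\<in>{1..n}. \<forall>x. f t x \<le> ereal (M t)" by (metis bchoice)
  have "Pstar n f A b \<le> ereal (\<Sum>t=1..n. M t)"
    unfolding Pstar_def
  proof (rule SUP_least)
    fix x :: "nat \<Rightarrow> real^'k"
    have "(\<Sum>t=1..n. f t (x t)) \<le> (\<Sum>t=1..n. ereal (M t))" using M by (intro sum_mono) auto
    then show "(\<Sum>t=1..n. f t (x t)) \<le> ereal (\<Sum>t=1..n. M t)" by simp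
  qed
  then obtain P where P: "Pstar n f A b = ereal P" and P0: "0 < P"
    using Pstar_pos by (cases "Pstar n f A b") auto
  define s where "s = 2^h * l"
  define th where "th = theta \<epsilon> h"
  define q where "q = (2::real)^h * \<epsilon>"
  have q0: "0 < q" unfolding q_def using eps by simp
  have twoL: "(2::real)^L = 1/\<epsilon>"
    using L_def eps by (metis log_powr_cancel powr_realpow zero_less_divide_1_iff zero_less_numeral
        powr_log_cancel one_less_numeral_iff semiring_norm(76) less_numeral_extra(4))
  have q1: "q \<le> 1/2"
  proof -
    have "(2::real)^(Suc h) \<le> 2^L" using h by (intro power_increasing) auto
    then have "2 * 2^h \<le> 1/\<epsilon>" using twoL by simp
    then show ?thesis unfolding q_def using eps by (simp add: field_simps)
  qed
  have s_real: "real s = q * n" unfolding s_def q_def using l_def by simp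
  have sn: "s \<le> n"
  proof -
    have "q * real n \<le> 1 * real n" using q1 by (intro mult_right_mono) auto
    then have "real s \<le> real n" using s_real by simp
    then show ?thesis by simp
  qed
  have th2: "th^2 = \<epsilon> / 2^(Suc h)"
  proof -
    have "th^2 = (2 powr (- (real h + 1) / 2))^2 * \<epsilon>"
      unfolding th_def theta_def using eps by (simp add: power_mult_distrib)
    also have "(2 powr (- (real h + 1) / 2))^2 = 2 powr (- (real h + 1))"
      by (simp add: power2_eq_square powr_add[symmetric])
    also have "\<dots> = inverse (2 powr real (Suc h))" unfolding powr_minus[symmetric] by (simp add: algebra_simps)
    also have "\<dots> = 1 / 2^(Suc h)" using powr_realpow[of 2 "Suc h"] by (simp only: divide_inverse mult_1)
    finally show ?thesis by simp
  qed
  have th0: "0 < th" unfolding th_def theta_def using eps by simp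
  have th1: "th < 1"
  proof -
    have "(1::real) \<le> 2^Suc h" by (rule one_le_power) simp
    then have "th^2 < 1" unfolding th2 using eps by (simp add: divide_less_eq)
    then show ?thesis using th0 by (simp add: abs_square_less_1)
  qed
  have thq: "th^2 * q = \<epsilon>^2 / 2" unfolding th2 q_def by (simp add: field_simps power2_eq_square)

  have key: "real (card E) \<le> card Perms * (exp (- (\<epsilon>^2 * V / (4 * \<gamma> * P))) + CARD('m) * exp (- (\<epsilon>^2 / (6 * \<gamma>))))"
    if V0: "0 < V" and VP: "V < P" and EP: "E \<subseteq> Perms" and EV: "\<forall>\<sigma>\<in>E. Ph \<epsilon> l h \<sigma> f A b < ereal V"
    for V E
  proof -
    have "ereal V < Pstar n f A b" using P VP by simp
    then obtain x where xfeas: "\<forall>i. (\<Sum>t=1..n. A t *v x t) $ i \<le> b $ i"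
      and xval: "ereal V < (\<Sum>t=1..n. f t (x t))"
      unfolding Pstar_def less_SUP_iff by blast
    have fprop: "(\<forall>y. f t y \<noteq> \<infinity>) \<and> (\<forall>y\<in>ext_dom (f t). \<forall>j. 0 \<le> y $ j) \<and> f t 0 = 0"
      if "t \<in> {1..n}" for t
      using fG that unfolding classG_def proper_ext_def by auto
    have notm: "f t (x t) \<noteq> -\<infinity>" if t: "t \<in> {1..n}" for t
    proof
      assume m: "f t (x t) = -\<infinity>"
      have "(\<Sum>u=1..n. f u (x u)) = f t (x t) + (\<Sum>u\<in>{1..n}-{t}. f u (x u))"
        using t by (simp add: sum.remove)
      moreover have "(\<Sum>u\<in>{1..n}-{t}. f u (x u)) \<noteq> \<infinity>"
        using fprop by (subst sum_Pinfty) auto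
      ultimately have "(\<Sum>u=1..n. f u (x u)) = -\<infinity>" using m by simp
      then show False using xval by simp
    qed
    have xnn: "0 \<le> x t $ j" if "t \<in> {1..n}" for t j
      using fprop[OF that] notm[OF that] unfolding ext_dom_def by auto
    have Ax_nn: "0 \<le> (A t *v x t) $ i" if "t \<in> {1..n}" for t i
      unfolding matrix_vector_mult_def using A_nonneg that xnn
      by (auto intro!: sum_nonneg mult_nonneg_nonneg)
    define x' where "x' t = (if 0 \<le> f t (x t) then x t else 0)" for t
    have Ax'_nn: "0 \<le> (A t *v x' t) $ i" if "t \<in> {1..n}" for t i
      using Ax_nn[OF that] unfolding x'_def by auto
    have Ax'_le: "(A t *v x' t) $ i \<le> (A t *v x t) $ i" if "t \<in> {1..n}" for t i
      using Ax_nn[OF that] unfolding x'_def by auto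
    have x'feas: "\<forall>i. (\<Sum>t=1..n. A t *v x' t) $ i \<le> b $ i"
    proof
      fix i
      have "(\<Sum>t=1..n. A t *v x' t) $ i = (\<Sum>t=1..n. (A t *v x' t) $ i)" by simp
      also have "\<dots> \<le> (\<Sum>t=1..n. (A t *v x t) $ i)" using Ax'_le by (intro sum_mono) auto
      also have "\<dots> = (\<Sum>t=1..n. A t *v x t) $ i" by simp
      finally show "(\<Sum>t=1..n. A t *v x' t) $ i \<le> b $ i" using xfeas[rule_format, of i] by (rule order_trans)
    qed
    have fx'_ge: "f t (x t) \<le> f t (x' t)" "0 \<le> f t (x' t)" if "t \<in> {1..n}" for t
      using fprop[OF that] unfolding x'_def by auto
    define v where "v t = real_of_ereal (f t (x' t))" for t
    have fv: "f t (x' t) = ereal (v t)" if "t \<in> {1..n}" for t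
      using fprop[OF that] fx'_ge(2)[OF that] unfolding v_def by (cases "f t (x' t)") auto
    have v0: "0 \<le> v t" if "t \<in> {1..n}" for t using fv[OF that] fx'_ge(2)[OF that] by simp
    define W where "W = (\<Sum>t=1..n. v t)"
    have VW: "V < W"
    proof -
      have "(\<Sum>t=1..n. f t (x t)) \<le> (\<Sum>t=1..n. f t (x' t))"
        by (intro sum_mono) (use fx'_ge in auto)
      with xval have "ereal V < (\<Sum>t=1..n. f t (x' t))" by (rule order_less_le_trans)
      also have "\<dots> = (\<Sum>t=1..n. ereal (v t))" using fv by (intro sum.cong) auto
      finally show ?thesis unfolding W_def by simp
    qed
    have WP: "W \<le> P"
    proof -
      have "(\<Sum>t=1..n. f t (x' t)) \<le> Pstar n f A b"
        unfolding Pstar_def using x'feas by (intro SUP_upper) auto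
      moreover have "(\<Sum>t=1..n. f t (x' t)) = ereal W"
        unfolding W_def using fv by (simp add: sum.cong[OF refl fv, symmetric])
      ultimately show ?thesis using P by simp
    qed
    have vP: "v t \<le> \<gamma> * P" if "t \<in> {1..n}" for t
    proof -
      have "x' t \<in> ext_dom (f t)" unfolding ext_dom_def using fv[OF that] by simp
      then have "f t (x' t) \<le> ereal \<gamma> * Pstar n f A b" using gamma_f that by blast
      then show ?thesis using fv[OF that] P by simp
    qed
    define w where "w i t = (A t *v x' t) $ i / b $ i" for i t
    have w0: "0 \<le> w i t" if "t \<in> {1..n}" for i t
      unfolding w_def using Ax'_nn[OF that] b_pos by (simp add: less_imp_le)
    have wg: "w i t \<le> \<gamma>" if "t \<in> {1..n}" for i t
      unfolding w_def using gamma_A that fx'_ge(2)[OF that] by blast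
    have wsum: "(\<Sum>t=1..n. w i t) \<le> 1" for i
    proof -
      have "(\<Sum>t=1..n. w i t) = (\<Sum>t=1..n. A t *v x' t) $ i / b $ i"
        unfolding w_def by (simp add: sum_divide_distrib)
      also have "\<dots> \<le> 1" using x'feas b_pos[rule_format, of i] by simp
      finally show ?thesis .
    qed
    define y1 where "y1 t = v t / (\<gamma> * P)" for t
    define mu1 where "mu1 = s * (\<Sum>t=1..n. y1 t) / n"
    define E1 where "E1 = {\<sigma>\<in>Perms. (\<Sum>t=1..s. y1 (\<sigma> t)) \<le> (1-th)*mu1}"
    define y2 where "y2 i t = w i t / \<gamma>" for i t
    define mu2 where "mu2 = q / \<gamma>"
    define E2 where "E2 i = {\<sigma>\<in>Perms. (1+th)*mu2 \<le> (\<Sum>t=1..s. y2 i (\<sigma> t))}" for i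
    have mu1_eq: "mu1 = q * W / (\<gamma> * P)"
      unfolding mu1_def y1_def W_def using s_real n_pos by (simp add: sum_divide_distrib[symmetric] field_simps)
    have sub: "E \<subseteq> E1 \<union> (\<Union>i. E2 i)"
    proof
      fix \<sigma> assume \<sigma>E: "\<sigma> \<in> E"
      show "\<sigma> \<in> E1 \<union> (\<Union>i. E2 i)"
      proof (rule ccontr)
        assume nE: "\<sigma> \<notin> E1 \<union> (\<Union>i. E2 i)"
        have \<sigma>P: "\<sigma> \<in> Perms" using \<sigma>E EP by auto
        have \<sigma>in: "\<sigma> t \<in> {1..n}" if "t \<in> {1..s}" for t
          using \<sigma>P that sn unfolding Perms_def by (intro perm_in[of \<sigma>]) auto
        have low: "(1-th)*mu1 < (\<Sum>t=1..s. y1 (\<sigma> t))" using nE \<sigma>P unfolding E1_def by auto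
        have up: "(\<Sum>t=1..s. y2 i (\<sigma> t)) < (1+th)*mu2" for i using nE \<sigma>P unfolding E2_def by (auto simp: not_le)
        have cons: "\<forall>i. (1 / (2 ^ h * \<epsilon> * (1 + theta \<epsilon> h))) * (\<Sum>t=1..2^h * l. A (\<sigma> t) *v x' (\<sigma> t)) $ i \<le> b $ i"
        proof
          fix i
          have "(\<Sum>t=1..s. A (\<sigma> t) *v x' (\<sigma> t)) $ i = (\<Sum>t=1..s. b $ i * \<gamma> * y2 i (\<sigma> t))"
            unfolding y2_def w_def using b_pos[rule_format, of i] gamma_pos by (simp add: field_simps)
          also have "\<dots> = b $ i * \<gamma> * (\<Sum>t=1..s. y2 i (\<sigma> t))" by (simp add: sum_distrib_left)
          also have "\<dots> \<le> b $ i * \<gamma> * ((1+th)*mu2)"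
            using up[of i] b_pos gamma_pos by (intro mult_left_mono) (auto simp: less_imp_le)
          also have "\<dots> = b $ i * (q * (1+th))" unfolding mu2_def using gamma_pos by simp
          finally have "(\<Sum>t=1..s. A (\<sigma> t) *v x' (\<sigma> t)) $ i \<le> b $ i * (q * (1+th))" .
          moreover have c0: "0 < q * (1+th)" using q0 th0 by simp
          ultimately have "(\<Sum>t=1..s. A (\<sigma> t) *v x' (\<sigma> t)) $ i / (q * (1+th)) \<le> b $ i"
            by (simp add: pos_divide_le_eq mult.commute)
          then have "(1 / (q * (1+th))) * (\<Sum>t=1..s. A (\<sigma> t) *v x' (\<sigma> t)) $ i \<le> b $ i"
            by simp
          then show "(1 / (2 ^ h * \<epsilon> * (1 + theta \<epsilon> h))) * (\<Sum>t=1..2^h * l. A (\<sigma> t) *v x' (\<sigma> t)) $ i \<le> b $ i"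
            unfolding q_def th_def s_def by simp
        qed
        have "ereal (1 / (2 ^ h * \<epsilon> * (1 - theta \<epsilon> h))) * (\<Sum>t=1..2^h * l. f (\<sigma> t) (x' (\<sigma> t)))
              \<le> Ph \<epsilon> l h \<sigma> f A b"
          unfolding Ph_def by (rule SUP_upper) (use cons in simp)
        moreover have "(\<Sum>t=1..2^h * l. f (\<sigma> t) (x' (\<sigma> t))) = ereal (\<Sum>t=1..s. v (\<sigma> t))"
        proof -
          have "(\<Sum>t=1..s. f (\<sigma> t) (x' (\<sigma> t))) = (\<Sum>t=1..s. ereal (v (\<sigma> t)))"
            using fv \<sigma>in by (intro sum.cong) auto
          then show ?thesis unfolding s_def by simp
        qed
        moreover have "V < (1 / (q * (1 - th))) * (\<Sum>t=1..s. v (\<sigma> t))"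
        proof -
          have "(\<Sum>t=1..s. y1 (\<sigma> t)) = (\<Sum>t=1..s. v (\<sigma> t)) / (\<gamma> * P)"
            unfolding y1_def by (simp add: sum_divide_distrib)
          with low have "(1-th) * (q * W / (\<gamma> * P)) < (\<Sum>t=1..s. v (\<sigma> t)) / (\<gamma> * P)"
            unfolding mu1_eq by simp
          then have "((1-th) * q * W) / (\<gamma> * P) < (\<Sum>t=1..s. v (\<sigma> t)) / (\<gamma> * P)"
            by (simp add: mult.assoc)
          then have "(1-th) * q * W < (\<Sum>t=1..s. v (\<sigma> t))"
            using gamma_pos P0 by (simp add: divide_less_cancel)
          moreover have "(1-th) * q * V < (1-th) * q * W" using VW th1 q0 by simp
          ultimately have "(1-th) * q * V < (\<Sum>t=1..s. v (\<sigma> t))" by linarith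
          then show ?thesis using th1 q0 by (simp add: field_simps)
        qed
        ultimately have "ereal V < Ph \<epsilon> l h \<sigma> f A b"
          unfolding q_def th_def by (metis order_less_le_trans times_ereal.simps(1) less_ereal.simps(1))
        moreover have "Ph \<epsilon> l h \<sigma> f A b < ereal V" using EV \<sigma>E by blast
        ultimately show False by (meson less_asym)
      qed
    qed
    have finE1: "finite E1" unfolding E1_def using finPerms by simp
    have finE2: "finite (E2 i)" for i unfolding E2_def using finPerms by simp
    have ce1: "card E \<le> card (E1 \<union> (\<Union>i. E2 i))"
      using sub finE1 finE2 by (intro card_mono) auto
    have ce2: "card (E1 \<union> (\<Union>i. E2 i)) \<le> card E1 + card (\<Union>i. E2 i)" by (rule card_Un_le)
    have ce3: "card (\<Union>i. E2 i) \<le> (\<Sum>i\<in>UNIV. card (E2 i))" by (rule card_UN_le) simp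
    have "card E \<le> card E1 + (\<Sum>i\<in>UNIV. card (E2 i))" using ce1 ce2 ce3 by linarith
    then have "real (card E) \<le> real (card E1 + (\<Sum>i\<in>UNIV. card (E2 i)))" by (simp only: of_nat_le_iff)
    then have cE: "real (card E) \<le> card E1 + (\<Sum>i\<in>UNIV. real (card (E2 i)))" by simp
    have c1: "real (card E1) \<le> card Perms * exp (- (\<epsilon>^2 * V / (4 * \<gamma> * P)))"
    proof -
      have y1b: "\<forall>t\<in>{1..n}. 0 \<le> y1 t \<and> y1 t \<le> 1"
        unfolding y1_def using v0 vP gamma_pos P0 by (auto simp: field_simps)
      have "real (card E1) \<le> card Perms * exp (-(th^2*mu1/2))"
        using chernoff_lower[OF y1b sn n_pos th0 th1 mu1_def] unfolding E1_def Perms_def by simp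
      also have "\<dots> \<le> card Perms * exp (- (\<epsilon>^2 * V / (4 * \<gamma> * P)))"
      proof -
        have "th^2*mu1/2 = (th^2*q) * W / (2*(\<gamma> * P))"
          unfolding mu1_eq by (simp add: field_simps)
        also have "\<dots> = \<epsilon>^2 * W / (4 * \<gamma> * P)"
          unfolding thq by (simp add: field_simps)
        finally have "th^2*mu1/2 = \<epsilon>^2 * W / (4 * \<gamma> * P)" .
        moreover have "\<epsilon>^2 * V / (4 * \<gamma> * P) \<le> \<epsilon>^2 * W / (4 * \<gamma> * P)"
          using VW gamma_pos P0 by (intro divide_right_mono mult_left_mono) auto
        ultimately have "- (th^2*mu1/2) \<le> - (\<epsilon>^2 * V / (4 * \<gamma> * P))" by linarith
        then show ?thesis by (intro mult_left_mono) auto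
      qed
      finally show ?thesis .
    qed
    have c2: "real (card (E2 i)) \<le> card Perms * exp (- (\<epsilon>^2 / (6 * \<gamma>)))" for i
    proof -
      have y2b: "\<forall>t\<in>{1..n}. 0 \<le> y2 i t \<and> y2 i t \<le> 1"
        unfolding y2_def using w0 wg gamma_pos by (auto simp: field_simps)
      have mu2b: "s * (\<Sum>t=1..n. y2 i t) / n \<le> mu2"
      proof -
        have "(\<Sum>t=1..n. y2 i t) \<le> 1/\<gamma>" unfolding y2_def using wsum[of i] gamma_pos
          by (simp add: sum_divide_distrib[symmetric] divide_right_mono)
        then have "q * (\<Sum>t=1..n. y2 i t) \<le> q * (1/\<gamma>)" using q0 by (intro mult_left_mono) auto
        moreover have "s * (\<Sum>t=1..n. y2 i t) / n = q * (\<Sum>t=1..n. y2 i t)" using s_real n_pos by simp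
        ultimately show ?thesis unfolding mu2_def by simp
      qed
      have "real (card (E2 i)) \<le> card Perms * exp (-(th^2*mu2/3))"
        using chernoff_upper[OF y2b sn n_pos th0 _ mu2b] th1 q0 gamma_pos
        unfolding E2_def Perms_def mu2_def by simp
      also have "th^2*mu2/3 = (th^2*q) / (3*\<gamma>)" unfolding mu2_def by simp
      also have "\<dots> = \<epsilon>^2 / (6 * \<gamma>)" unfolding thq by simp
      finally show ?thesis .
    qed
    have "real (card E) \<le> card Perms * exp (- (\<epsilon>^2 * V / (4 * \<gamma> * P))) + (\<Sum>i\<in>(UNIV::'m set). card Perms * exp (- (\<epsilon>^2 / (6 * \<gamma>))))"
    proof -
      have "(\<Sum>i\<in>UNIV. real (card (E2 i))) \<le> (\<Sum>i\<in>(UNIV::'m set). card Perms * exp (- (\<epsilon>^2 / (6 * \<gamma>))))"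
        by (rule sum_mono) (rule c2)
      then show ?thesis using cE c1 by linarith
    qed
    then show ?thesis by (simp add: algebra_simps)
  qed
  define Ev where "Ev = Perms \<inter> {\<sigma>. Ph \<epsilon> l h \<sigma> f A b < Pstar n f A b}"
  have prob_eq: "measure_pmf.prob (pmf_of_set {\<sigma>. \<sigma> permutes {1..n}}) {\<sigma>. Ph \<epsilon> l h \<sigma> f A b < Pstar n f A b}
      = card Ev / card Perms"
    unfolding Ev_def using measure_pmf_of_set[OF PermsNE finPerms] unfolding Perms_def by simp
  define R where "R = exp (- ((\<epsilon> ^ 2) / (4 * \<gamma>))) + real CARD('m) * exp (- ((\<epsilon> ^ 2) / (6 * \<gamma>)))"
  have R0: "0 \<le> R" unfolding R_def by simp
  define g where "g V = card Perms * (exp (- (\<epsilon>^2 * V / (4 * \<gamma> * P))) + CARD('m) * exp (- (\<epsilon>^2 / (6 * \<gamma>))))" for V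
  have gP: "g P = card Perms * R" unfolding g_def R_def using P0 by simp
  have cEv: "real (card Ev) \<le> card Perms * R"
  proof (cases "Ev = {}")
    case True
    then show ?thesis using R0 by simp
  next
    case False
    have finEv: "finite Ev" unfolding Ev_def using finPerms by simp
    define c where "c = Max ((\<lambda>\<sigma>. Ph \<epsilon> l h \<sigma> f A b) ` Ev)"
    have cin: "c \<in> (\<lambda>\<sigma>. Ph \<epsilon> l h \<sigma> f A b) ` Ev" unfolding c_def using finEv False by (intro Max_in) auto
    then have cless: "c < ereal P" unfolding Ev_def using P by auto
    have cge: "Ph \<epsilon> l h \<sigma> f A b \<le> c" if "\<sigma> \<in> Ev" for \<sigma>
      unfolding c_def using finEv that by (intro Max_ge) auto
    define V0 where "V0 = (if c = -\<infinity> then P/2 else max (P/2) (real_of_ereal c))"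
    have V0P: "V0 < P"
    proof (cases "c = -\<infinity>")
      case True then show ?thesis unfolding V0_def using P0 by simp
    next
      case False
      then have "c = ereal (real_of_ereal c)" using cless by (cases c) auto
      then have "real_of_ereal c < P" using cless by (metis less_ereal.simps(1))
      then show ?thesis unfolding V0_def using False P0 by simp
    qed
    have cV0: "c \<le> ereal V0"
    proof (cases "c = -\<infinity>")
      case True then show ?thesis by simp
    next
      case False
      then have "c = ereal (real_of_ereal c)" using cless by (cases c) auto
      moreover have "real_of_ereal c \<le> V0" unfolding V0_def using False by simp
      ultimately show ?thesis by (metis ereal_less_eq(3))
    qed
    have ev: "eventually (\<lambda>V. real (card Ev) \<le> g V) (at_left P)"
      using eventually_at_left_real[OF V0P]
    proof (rule eventually_mono)
      fix V assume V: "V \<in> {V0<..<P}"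
      have "P/2 \<le> V0" unfolding V0_def by (auto simp del: max.bounded_iff intro: max.cobounded1)
      then have V0': "0 < V" using V P0 by simp
      have "\<forall>\<sigma>\<in>Ev. Ph \<epsilon> l h \<sigma> f A b < ereal V"
      proof
        fix \<sigma> assume "\<sigma> \<in> Ev"
        then have "Ph \<epsilon> l h \<sigma> f A b \<le> ereal V0" using cge cV0 by (meson order_trans)
        also have "ereal V0 < ereal V" using V by simp
        finally show "Ph \<epsilon> l h \<sigma> f A b < ereal V" .
      qed
      moreover have "Ev \<subseteq> Perms" unfolding Ev_def by auto
      ultimately show "real (card Ev) \<le> g V" unfolding g_def using key[OF V0'] V by simp
    qed
    have lim: "(g \<longlongrightarrow> g P) (at_left P)" unfolding g_def using gamma_pos P0 by (intro tendsto_intros) auto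
    have "real (card Ev) \<le> g P"
      by (rule tendsto_le[OF trivial_limit_at_left_real lim tendsto_const ev])
    then show ?thesis using gP by simp
  qed
  show ?thesis unfolding prob_eq using cEv cardP
    by (simp add: divide_le_eq R_def mult.commute)
qed

end
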